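(* Let $(u,\mu)$ be a weak conservative solution of the Hunter--Saxton equation, $T>0$, $F(t,x)=\mu(t,(-\infty,x))$, and let $D>0$ be such that $|u(t,x)-u(s,y)|\le D(|t-s|+|x-y|)^{1/2}$ for all $(t,x),(s,y)\in[0,T]\times\mathbb{R}$. Then there is a constant $M>0$, depending only on $D$, $T$ and $\|u(0,\cdot)\|_{L^\infty}$, such that for every solution $x(\cdot)$ of $\dot x(t)=u(t,x(t))$ on $[0,T]$, $$F(0,x(0)+)\le F\big(t,\,x(0)+u(0,x(0))t+Mt^{3/2}+\big)\qquad\text{for all }t\in[0,T],$$ where $F(t,z+)=\lim_{w\downarrow z}F(t,w)$.
   Context: The Hunter--Saxton equation is $u_t+uu_x=\tfrac14\big(\int_{-\infty}^x d\mu(t,z)-\int_x^{\infty}d\mu(t,z)\big)$, $\mu_t+(u\mu)_x=0$. Fix $\psi^\pm\in C^\infty(\mathbb{R})$ with $\psi^++\psi^-\equiv1$, $0\le\psi^\pm\le1$, $\operatorname{supp}\psi^-\subset(-\infty,1)$, $\operatorname{supp}\psi^+\subset(-1,\infty)$. $E_1=\{\bar f+a\psi^+:\bar f\in H^1,a\in\mathbb{R}\}$, $E_2=\{\bar f+a\psi^++b\psi^-:\bar f\in H^1,a,b\in\mathbb{R}\}$; $E_1^0,E_2^0$ analogously with $\bar f\in L^2$, normed by $(\|\bar f\|_{L^2}^2+a^2)^{1/2}$ resp. $(\|\bar f\|_{L^2}^2+a^2+b^2)^{1/2}$. $\mathcal{D}$: pairs $(u,\mu)$, $u\in E_2$, $\mu$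 positive finite Radon measure, $\mu((-\infty,\cdot))\in E_1^0$, $d\mu_{\rm ac}=u_x^2dx$. A weak conservative solution with initial data in $\mathcal{D}$ is a pair $(u,\mu)$ with: (i) $u(t,\cdot)\in E_2$; (ii) $\mu(t,(-\infty,\cdot))\in E_1^0$, $d\mu_{\rm ac}(t)=u_x^2(t,\cdot)dx$; (iii) for all $\phi\in C_c^\infty([0,\infty)\times\mathbb{R})$: $\int_0^\infty\!\int[u\phi_t+\tfrac12u^2\phi_x+\tfrac14(\int_{-\infty}^xd\mu(t)-\int_x^\infty d\mu(t))\phi]dxdt=-\int u\phi|_{t=0}dx$ and $\int_0^\infty\!\int(\phi_t+u\phi_x)d\mu(t)dt=-\int\phi|_{t=0}d\mu(0)$; (iv) for every $T>0$, $u$ Hölder continuous on $[0,T]\times\mathbb{R}$ and $t\mapsto u(t,\cdot)$ Lipschitz $[0,T]\to E_2^0$; (v) for a.e. $t$, $\mu(t)$ absolutely continuous with density $u_x^2(t,\cdot)$; (vi) $t\mapsto\mu(t)$ weakly continuous. *)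

theory Defs
  imports "HOL-Analysis.Analysis"
begin

definition smooth1 :: "(real \<Rightarrow> real) \<Rightarrow> bool" where
  "smooth1 f \<longleftrightarrow> (\<forall>n x. ((deriv ^^ n) f has_real_derivative (deriv ^^ Suc n) f x) (at x))"

definition smooth2 :: "(real \<times> real \<Rightarrow> real) \<Rightarrow> bool" where
  "smooth2 f \<longleftrightarrow> (\<exists>Dp :: nat \<Rightarrow> nat \<Rightarrow> real \<times> real \<Rightarrow> real. Dp 0 0 = f \<and>
     (\<forall>i j. continuous_on UNIV (Dp i j)) \<and>
     (\<forall>i j t x. ((\<lambda>s. Dp i j (s, x)) has_real_derivative Dp (Suc i) j (t, x)) (at t) \<and>
                ((\<lambda>y. Dp i j (t, y)) has_real_derivative Dp i (Suc j) (t, x)) (at x)))"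

(* test functions C_c^infinity([0,oo) x R): restrictions of compactly supported smooth functions *)
definition test_fun :: "(real \<times> real \<Rightarrow> real) \<Rightarrow> bool" where
  "test_fun phi \<longleftrightarrow> smooth2 phi \<and> compact (closure {z. phi z \<noteq> 0})"

definition d_t :: "(real \<times> real \<Rightarrow> real) \<Rightarrow> real \<Rightarrow> real \<Rightarrow> real" where
  "d_t phi t x = deriv (\<lambda>s. phi (s, x)) t"

definition d_x :: "(real \<times> real \<Rightarrow> real) \<Rightarrow> real \<Rightarrow> real \<Rightarrow> real" where
  "d_x phi t x = deriv (\<lambda>y. phi (t, y)) x"

(* the cut-off function psi^+ ; psi^- = 1 - psi^+ *)
definition cutoff :: "(real \<Rightarrow> real) \<Rightarrow> bool" where
  "cutoff psi \<longleftrightarrow> smooth1 psi \<and> (\<forall>x. 0 \<le> psi x \<and> psi x \<le> 1) \<and>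
     closure {x. 1 - psi x \<noteq> 0} \<subseteq> {..<1} \<and> closure {x. psi x \<noteq> 0} \<subseteq> {-1<..}"

definition L2 :: "(real \<Rightarrow> real) \<Rightarrow> bool" where
  "L2 f \<longleftrightarrow> f \<in> borel_measurable lborel \<and> integrable lborel (\<lambda>x. (f x)^2)"

(* H^1, via the (absolutely) continuous representative *)
definition H1 :: "(real \<Rightarrow> real) \<Rightarrow> bool" where
  "H1 f \<longleftrightarrow> L2 f \<and> (\<exists>g. L2 g \<and> (\<forall>x y. x \<le> y \<longrightarrow>
      set_integrable lborel {x..y} g \<and> f y - f x = (LINT s:{x..y}|lborel. g s)))"

definition E2 :: "(real \<Rightarrow> real) \<Rightarrow> (real \<Rightarrow> real) \<Rightarrow> bool" where
  "E2 psi f \<longleftrightarrow> (\<exists>fb a b. H1 fb \<and> (\<forall>x. f x = fb x + a * psi x + b * (1 - psi x)))"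

definition E1_0 :: "(real \<Rightarrow> real) \<Rightarrow> (real \<Rightarrow> real) \<Rightarrow> bool" where
  "E1_0 psi F \<longleftrightarrow> (\<exists>a. L2 (\<lambda>x. F x - a * psi x))"

definition Fmu :: "(real \<Rightarrow> real measure) \<Rightarrow> real \<Rightarrow> real \<Rightarrow> real" where
  "Fmu mu t x = measure (mu t) {..<x}"

definition Fplus :: "(real \<Rightarrow> real measure) \<Rightarrow> real \<Rightarrow> real \<Rightarrow> real" where
  "Fplus mu t z = Lim (at_right z) (\<lambda>w. Fmu mu t w)"

(* weak conservative solution of Hunter-Saxton, items (i)-(vi); ux t is the x-derivative of u t *)
definition HS_weak_cons_sol ::
  "(real \<Rightarrow> real) \<Rightarrow> (real \<Rightarrow> real \<Rightarrow> real) \<Rightarrow> (real \<Rightarrow> real measure) \<Rightarrow> bool" where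
  "HS_weak_cons_sol psi u mu \<longleftrightarrow>
   (\<exists>ux :: real \<Rightarrow> real \<Rightarrow> real.
     (\<forall>t\<ge>0. sets (mu t) = sets borel \<and> finite_measure (mu t)) \<and>
     (\<forall>t\<ge>0. \<forall>x y. x \<le> y \<longrightarrow> set_integrable lborel {x..y} (ux t) \<and>
                 u t y - u t x = (LINT s:{x..y}|lborel. ux t s)) \<and>
     \<comment> \<open>(i)\<close>
     (\<forall>t\<ge>0. E2 psi (u t)) \<and>
     \<comment> \<open>(ii)\<close>
     (\<forall>t\<ge>0. E1_0 psi (Fmu mu t) \<and>
        (\<exists>N \<in> null_sets lborel. \<forall>A \<in> sets borel.
           emeasure (mu t) A = set_nn_integral lborel A (\<lambda>x. ennreal ((ux t x)^2)) + emeasure (mu t) (A \<inter> N))) \<and>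
     \<comment> \<open>(iii)\<close>
     (\<forall>phi. test_fun phi \<longrightarrow>
        (LINT t:{0..}|lborel. LINT x|lborel.
            u t x * d_t phi t x + (u t x)^2 / 2 * d_x phi t x
            + 1/4 * (measure (mu t) {..<x} - measure (mu t) {x<..}) * phi (t, x))
          = - (LINT x|lborel. u 0 x * phi (0, x)) \<and>
        (LINT t:{0..}|lborel. LINT x|mu t. d_t phi t x + u t x * d_x phi t x)
          = - (LINT x|mu 0. phi (0, x))) \<and>
     \<comment> \<open>(iv)\<close>
     (\<forall>T>0. (\<exists>\<alpha> C. 0 < \<alpha> \<and> \<alpha> \<le> 1 \<and> (\<forall>t\<in>{0..T}. \<forall>s\<in>{0..T}. \<forall>x y.
                 \<bar>u t x - u s y\<bar> \<le> C * dist (t, x) (s, y) powr \<alpha>)) \<and>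
            (\<exists>L. \<forall>t\<in>{0..T}. \<forall>s\<in>{0..T}. \<exists>fb a b. L2 fb \<and>
                 (\<forall>x. u t x - u s x = fb x + a * psi x + b * (1 - psi x)) \<and>
                 sqrt ((LINT x|lborel. (fb x)^2) + a^2 + b^2) \<le> L * \<bar>t - s\<bar>)) \<and>
     \<comment> \<open>(v)\<close>
     (AE t in lborel. t \<ge> 0 \<longrightarrow>
        (\<forall>A \<in> sets borel. emeasure (mu t) A = set_nn_integral lborel A (\<lambda>x. ennreal ((ux t x)^2)))) \<and>
     \<comment> \<open>(vi) weak (vague) continuity\<close>
     (\<forall>f. continuous_on UNIV f \<and> compact (closure {x. f x \<noteq> (0::real)}) \<longrightarrow>
        continuous_on {0..} (\<lambda>t. LINT x|mu t. f x)))"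

end

theory Submission
  imports Defs
begin

lemma Fplus_tendsto:
  assumes "sets (mu t) = sets borel" "finite_measure (mu t)"
  shows "((\<lambda>w. Fmu mu t w) \<longlongrightarrow> Fplus mu t z) (at_right z)"
proof -
  interpret finite_measure "mu t" by fact
  have "((\<lambda>w. Fmu mu t w) \<longlongrightarrow> Inf ((\<lambda>w. Fmu mu t w) ` ({z<..} \<inter> UNIV))) (at z within ({z<..} \<inter> UNIV))"
    by (rule Lim_right_bound[where K=0]) (auto simp: Fmu_def assms intro!: finite_measure_mono)
  then have "((\<lambda>w. Fmu mu t w) \<longlongrightarrow> Inf ((\<lambda>w. Fmu mu t w) ` ({z<..} \<inter> UNIV))) (at_right z)" by simp
  then show ?thesis unfolding Fplus_def using tendsto_Lim trivial_limit_at_right_real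
    by (metis tendsto_Lim)
qed

lemma Fplus_le:
  assumes "sets (mu t) = sets borel" "finite_measure (mu t)" "z < w"
  shows "Fplus mu t z \<le> Fmu mu t w"
proof (rule tendsto_upperbound[OF Fplus_tendsto[of mu t z, OF assms(1,2)]])
  interpret finite_measure "mu t" by fact
  show "\<forall>\<^sub>F x in at_right z. Fmu mu t x \<le> Fmu mu t w"
    using eventually_at_right_real[OF assms(3)]
    by eventually_elim (auto simp: Fmu_def assms intro!: finite_measure_mono)
qed simp

lemma Fplus_ge:
  assumes "sets (mu t) = sets borel" "finite_measure (mu t)" "\<And>w. z < w \<Longrightarrow> A \<le> Fmu mu t w"
  shows "A \<le> Fplus mu t z"
proof (rule tendsto_lowerbound[OF Fplus_tendsto[of mu t z, OF assms(1,2)]])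
  show "\<forall>\<^sub>F x in at_right z. A \<le> Fmu mu t x"
    using eventually_at_right_less[of z] by eventually_elim (auto intro: assms(3))
qed simp

datatype ex = C real | Vt | Vx | Ad ex ex | Mu ex ex | Cp "real \<Rightarrow> real" nat ex

fun ev :: "ex \<Rightarrow> real \<times> real \<Rightarrow> real" where
  "ev (C c) p = c"
| "ev Vt p = fst p"
| "ev Vx p = snd p"
| "ev (Ad a b) p = ev a p + ev b p"
| "ev (Mu a b) p = ev a p * ev b p"
| "ev (Cp g n e) p = (deriv ^^ n) g (ev e p)"

fun Dt :: "ex \<Rightarrow> ex" where
  "Dt (C c) = C 0"
| "Dt Vt = C 1"
| "Dt Vx = C 0"
| "Dt (Ad a b) = Ad (Dt a) (Dt b)"
| "Dt (Mu a b) = Ad (Mu (Dt a) b) (Mu a (Dt b))"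
| "Dt (Cp g n e) = Mu (Cp g (Suc n) e) (Dt e)"

fun Dx :: "ex \<Rightarrow> ex" where
  "Dx (C c) = C 0"
| "Dx Vt = C 0"
| "Dx Vx = C 1"
| "Dx (Ad a b) = Ad (Dx a) (Dx b)"
| "Dx (Mu a b) = Ad (Mu (Dx a) b) (Mu a (Dx b))"
| "Dx (Cp g n e) = Mu (Cp g (Suc n) e) (Dx e)"

fun wf :: "ex \<Rightarrow> bool" where
  "wf (Ad a b) = (wf a \<and> wf b)"
| "wf (Mu a b) = (wf a \<and> wf b)"
| "wf (Cp g n e) = (smooth1 g \<and> wf e)"
| "wf _ = True"

lemma wf_Dt: "wf e \<Longrightarrow> wf (Dt e)" by (induction e) auto
lemma wf_Dx: "wf e \<Longrightarrow> wf (Dx e)" by (induction e) auto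
lemma wf_Dtn: "wf e \<Longrightarrow> wf ((Dt ^^ i) e)" by (induction i) (auto simp: wf_Dt)
lemma wf_Dxn: "wf e \<Longrightarrow> wf ((Dx ^^ i) e)" by (induction i) (auto simp: wf_Dx)

lemma smooth1_D: "smooth1 g \<Longrightarrow> ((deriv ^^ n) g has_real_derivative (deriv ^^ Suc n) g y) (at y)"
  unfolding smooth1_def by blast

lemma smooth1_D': "smooth1 g \<Longrightarrow> ((deriv ^^ n) g has_real_derivative deriv ((deriv ^^ n) g) y) (at y)"
  using smooth1_D[of g n y] by simp

lemma ev_Dt: "wf e \<Longrightarrow> ((\<lambda>s. ev e (s, x)) has_real_derivative ev (Dt e) (t, x)) (at t)"
proof (induction e arbitrary: t)
  case (Cp g n e)
  then show ?case
    by (auto intro!: DERIV_chain2[where f="(deriv ^^ n) g"] smooth1_D')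
qed (auto intro!: derivative_eq_intros)

lemma ev_Dx: "wf e \<Longrightarrow> ((\<lambda>y. ev e (t, y)) has_real_derivative ev (Dx e) (t, x)) (at x)"
proof (induction e arbitrary: x)
  case (Cp g n e)
  then show ?case
    by (auto intro!: DERIV_chain2[where f="(deriv ^^ n) g"] smooth1_D')
qed (auto intro!: derivative_eq_intros)

lemma ev_cont: "wf e \<Longrightarrow> continuous_on UNIV (ev e)"
proof (induction e)
  case (Cp g n e)
  have "continuous_on UNIV ((deriv ^^ n) g)"
    using Cp smooth1_D by (auto intro!: continuous_at_imp_continuous_on DERIV_isCont)
  then show ?case using Cp
    by (auto intro: continuous_on_compose2[where f="ev e"])
qed (auto intro!: continuous_intros)

lemma ev_comm: "wf e \<Longrightarrow> ev (Dt (Dx e)) = ev (Dx (Dt e))"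
proof (induction e)
  case (Ad a b) then show ?case by (auto simp: fun_eq_iff)
next
  case (Mu a b) then show ?case by (auto simp: fun_eq_iff algebra_simps)
next
  case (Cp g n e) then show ?case by (auto simp: fun_eq_iff algebra_simps)
qed auto

lemma ev_cong_Dt: "wf a \<Longrightarrow> wf b \<Longrightarrow> ev a = ev b \<Longrightarrow> ev (Dt a) = ev (Dt b)"
proof (rule ext)
  fix p :: "real \<times> real"
  assume "wf a" "wf b" "ev a = ev b"
  obtain t x where p: "p = (t, x)" by (cases p)
  from ev_Dt[OF \<open>wf a\<close>, of x t] ev_Dt[OF \<open>wf b\<close>, of x t] \<open>ev a = ev b\<close>
  show "ev (Dt a) p = ev (Dt b) p" unfolding p using DERIV_unique by metis
qed

lemma ev_Dx_Dtn: "wf e \<Longrightarrow> ev (Dx ((Dt ^^ i) e)) = ev ((Dt ^^ i) (Dx e))"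
proof (induction i)
  case (Suc i)
  have "ev (Dx ((Dt ^^ Suc i) e)) = ev (Dt (Dx ((Dt ^^ i) e)))"
    using ev_comm[of "(Dt ^^ i) e"] wf_Dtn[OF Suc.prems] by simp
  also have "\<dots> = ev (Dt ((Dt ^^ i) (Dx e)))"
    by (rule ev_cong_Dt) (use Suc wf_Dtn wf_Dx wf_Dxn in auto)
  finally show ?case by simp
qed simp

lemma smooth2_ev: "wf e \<Longrightarrow> smooth2 (ev e)"
  unfolding smooth2_def
proof (intro exI[of _ "\<lambda>i j. ev ((Dt ^^ i) ((Dx ^^ j) e))"] conjI allI)
  assume "wf e"
  fix i j t x
  show "continuous_on UNIV (ev ((Dt ^^ i) ((Dx ^^ j) e)))"
    by (intro ev_cont wf_Dtn wf_Dxn \<open>wf e\<close>)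
  show "((\<lambda>s. ev ((Dt ^^ i) ((Dx ^^ j) e)) (s, x)) has_real_derivative
         ev ((Dt ^^ Suc i) ((Dx ^^ j) e)) (t, x)) (at t)"
    using ev_Dt[OF wf_Dtn[OF wf_Dxn[OF \<open>wf e\<close>]]] by simp
  have "((\<lambda>y. ev ((Dt ^^ i) ((Dx ^^ j) e)) (t, y)) has_real_derivative
         ev (Dx ((Dt ^^ i) ((Dx ^^ j) e))) (t, x)) (at x)"
    using ev_Dx[OF wf_Dtn[OF wf_Dxn[OF \<open>wf e\<close>]]] by simp
  then show "((\<lambda>y. ev ((Dt ^^ i) ((Dx ^^ j) e)) (t, y)) has_real_derivative
         ev ((Dt ^^ i) ((Dx ^^ Suc j) e)) (t, x)) (at x)"
    using ev_Dx_Dtn[OF wf_Dxn[OF \<open>wf e\<close>], of i j] by simp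
qed simp

lemma smooth1_ev: "wf e \<Longrightarrow> smooth1 (\<lambda>x. ev e (0, x))"
proof -
  assume "wf e"
  have "(deriv ^^ n) (\<lambda>x. ev e (0, x)) = (\<lambda>x. ev ((Dx ^^ n) e) (0, x))" for n
  proof (induction n)
    case (Suc n)
    have "deriv (\<lambda>x. ev ((Dx ^^ n) e) (0, x)) y = ev ((Dx ^^ Suc n) e) (0, y)" for y
      using ev_Dx[OF wf_Dxn[OF \<open>wf e\<close>], of n 0 y] by (auto intro!: DERIV_imp_deriv)
    then show ?case using Suc by simp
  qed simp
  moreover have "((\<lambda>x. ev ((Dx ^^ n) e) (0, x)) has_real_derivative ev ((Dx ^^ Suc n) e) (0, x)) (at x)" for n x
    using ev_Dx[OF wf_Dxn[OF \<open>wf e\<close>], of n 0 x] by simp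
  ultimately show ?thesis unfolding smooth1_def by metis
qed

lemma cutoff_props:
  assumes "cutoff psi"
  shows "smooth1 psi" "\<And>x. 0 \<le> psi x" "\<And>x. psi x \<le> 1" "\<And>x. x \<le> -1 \<Longrightarrow> psi x = 0"
    "\<And>x. 1 \<le> x \<Longrightarrow> psi x = 1" "continuous_on UNIV psi"
proof -
  show s: "smooth1 psi" using assms unfolding cutoff_def by blast
  have c0: "\<forall>x. 0 \<le> psi x \<and> psi x \<le> 1" using assms unfolding cutoff_def by blast
  show "0 \<le> psi x" "psi x \<le> 1" for x using c0 by auto
  have c1: "closure {x. psi x \<noteq> 0} \<subseteq> {-1<..}" and c2: "closure {x. 1 - psi x \<noteq> 0} \<subseteq> {..<1}"
    using assms unfolding cutoff_def by (simp_all only:)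
  show "psi x = 0" if "x \<le> -1" for x
  proof (rule ccontr)
    assume "psi x \<noteq> 0"
    then have "x \<in> closure {x. psi x \<noteq> 0}" using closure_subset[of "{x. psi x \<noteq> 0}"] by (simp add: subset_iff)
    then have "x \<in> {-1<..}" by (rule subsetD[OF c1])
    then show False using that by simp
  qed
  show "psi x = 1" if "1 \<le> x" for x
  proof (rule ccontr)
    assume "psi x \<noteq> 1"
    then have "x \<in> {x. 1 - psi x \<noteq> 0}" by simp
    then have "x \<in> closure {x. 1 - psi x \<noteq> 0}" using closure_subset[of "{x. 1 - psi x \<noteq> 0}"] by (simp add: subset_iff)
    then have "x \<in> {..<1}" by (rule subsetD[OF c2])
    then show False using that by simp
  qed
  have "isCont psi x" for x using smooth1_D[OF s, of 0 x] by (auto intro: DERIV_isCont)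
  then show "continuous_on UNIV psi" by (simp add: continuous_at_imp_continuous_on)
qed
lemma step_exists:
  assumes "cutoff psi"
  shows "\<exists>S s. smooth1 S \<and> (\<forall>x. (S has_real_derivative s x) (at x)) \<and> continuous_on UNIV s \<and>
     (\<forall>x. 0 \<le> s x) \<and> (\<forall>x. x \<le> -1 \<longrightarrow> S x = 0) \<and> (\<forall>x. 1 \<le> x \<longrightarrow> S x = 1) \<and>
     (\<forall>x. s x \<noteq> 0 \<longrightarrow> -1 < x \<and> x < 1) \<and> (\<forall>x. 0 \<le> S x \<and> S x \<le> 1)"
proof -
  note P = cutoff_props[OF assms]
  define b where "b x = psi x * (1 - psi x)" for x
  define E where "E = Mu (Cp psi 0 Vx) (Ad (C 1) (Mu (C (-1)) (Cp psi 0 Vx)))"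
  have bE: "b = (\<lambda>x. ev E (0, x))" by (auto simp: b_def E_def fun_eq_iff algebra_simps)
  have wfE: "wf E" using P by (simp add: E_def)
  have sb: "smooth1 b" unfolding bE by (rule smooth1_ev[OF wfE])
  have bcont: "continuous_on A b" for A
    unfolding b_def by (intro continuous_intros continuous_on_subset[OF P(6)]) auto
  have b0: "0 \<le> b x" for x using P(2,3)[of x] by (simp add: b_def)
  have bout: "b x = 0" if "x \<le> -1 \<or> 1 \<le> x" for x using P(4,5)[of x] that by (auto simp: b_def)
  obtain xm where xm: "-1 \<le> xm" "xm \<le> 1" "psi xm = 1/2"
    using IVT[of psi "-1" "1/2" 1] P(4,5)[of "-1"] P(4,5)[of 1] P(6)
    by (auto simp: continuous_on_eq_continuous_at)
  have bxm: "b xm \<noteq> 0" using xm by (simp add: b_def)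
  define c where "c = integral {-1..1} b"
  have "c \<ge> 0" unfolding c_def using b0 bcont
    by (intro integral_nonneg integrable_continuous_interval) auto
  moreover have "c \<noteq> 0" unfolding c_def
    using integral_eq_0_iff[of "-1" 1 b] bcont b0 bxm xm by auto
  ultimately have cpos: "c > 0" by simp
  define Bi where "Bi x = integral {-2..x} b" for x
  have int_b: "b integrable_on {p..q}" for p q using bcont by (intro integrable_continuous_interval)
  have Bi_low: "Bi x = 0" if "x < -1" for x
  proof -
    have "Bi x = integral {-2..x} (\<lambda>_. 0::real)" unfolding Bi_def
      by (rule integral_cong) (use bout that in auto)
    then show ?thesis by simp
  qed
  have Bi_lowe: "Bi x = 0" if "x \<le> -1" for x
  proof -
    have "Bi x = integral {-2..x} (\<lambda>_. 0::real)" unfolding Bi_def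
      by (rule integral_cong) (use bout that in auto)
    then show ?thesis by simp
  qed
  have Bi_high: "Bi x = c" if "1 \<le> x" for x
  proof -
    have "Bi x = integral {-2..1} b + integral {1..x} b" unfolding Bi_def
      using Henstock_Kurzweil_Integration.integral_combine[of "-2" 1 x b] that int_b by simp
    also have "integral {1..x} b = integral {1..x::real} (\<lambda>_. 0::real)"
      by (rule integral_cong) (use bout in auto)
    also have "integral {-2..1} b = integral {-2..-1} b + integral {-1..1} b"
      using Henstock_Kurzweil_Integration.integral_combine[of "-2" "-1" 1 b] int_b by simp
    also have "integral {-2..-1} b = integral {-2..-1::real} (\<lambda>_. 0::real)"
      by (rule integral_cong) (use bout in auto)
    finally show ?thesis by (simp add: c_def)
  qed
  have Bi_der: "(Bi has_real_derivative b x) (at x)" for x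
  proof (cases "x < -1")
    case True
    have "((\<lambda>_. 0::real) has_real_derivative b x) (at x)" using bout True by simp
    then show ?thesis
      by (rule has_field_derivative_transform_within_open[where S="{..<-1}"]) (use True Bi_low in auto)
  next
    case False
    have "(Bi has_real_derivative b x) (at x within {-2..x+1})"
      unfolding Bi_def by (rule integral_has_real_derivative) (use bcont False in auto)
    moreover have "at x within {-2..x+1} = at x"
      by (rule at_within_interior) (use False in auto)
    ultimately show ?thesis by simp
  qed
  define S where "S x = Bi x / c" for x
  define s where "s x = b x / c" for x
  have Sder: "(S has_real_derivative s x) (at x)" for x
    unfolding S_def s_def using Bi_der[of x] cpos by (auto intro!: derivative_eq_intros)
  have "deriv S = s" using Sder by (auto simp: fun_eq_iff intro: DERIV_imp_deriv)
  have sE: "s = (\<lambda>x. ev (Mu (C (1/c)) E) (0, x))" by (auto simp: s_def bE fun_eq_iff)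
  have ss: "smooth1 s" unfolding sE by (rule smooth1_ev) (simp add: wfE)
  have "smooth1 S" unfolding smooth1_def
  proof (intro allI)
    fix n x
    show "((deriv ^^ n) S has_real_derivative (deriv ^^ Suc n) S x) (at x)"
    proof (cases n)
      case 0 then show ?thesis using Sder \<open>deriv S = s\<close> by simp
    next
      case (Suc m)
      have "(deriv ^^ Suc k) S = (deriv ^^ k) s" for k
        using \<open>deriv S = s\<close> by (simp add: funpow_Suc_right del: funpow.simps)
      then show ?thesis using smooth1_D[OF ss, of m x] Suc by simp
    qed
  qed
  moreover have "continuous_on UNIV s" unfolding s_def using cpos by (intro continuous_intros bcont) auto
  moreover have s0: "\<forall>x. 0 \<le> s x" using b0 cpos by (simp add: s_def)
  moreover have "\<forall>x. x \<le> -1 \<longrightarrow> S x = 0" using Bi_lowe by (simp add: S_def)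
  moreover have "\<forall>x. 1 \<le> x \<longrightarrow> S x = 1" using Bi_high cpos by (simp add: S_def)
  moreover have "\<forall>x. s x \<noteq> 0 \<longrightarrow> -1 < x \<and> x < 1" 
  proof (intro allI impI)
    fix x assume "s x \<noteq> 0"
    then have "b x \<noteq> 0" by (simp add: s_def)
    then show "-1 < x \<and> x < 1" using bout[of x] by linarith
  qed
  moreover have "\<forall>x. (S has_real_derivative s x) (at x)" using Sder by simp
  moreover have mono: "S p \<le> S q" if "p \<le> q" for p q
    using DERIV_nonneg_imp_nondecreasing[OF that, of S] Sder s0 by metis
  have "\<forall>x. 0 \<le> S x \<and> S x \<le> 1"
  proof
    fix x
    have "S (min x (-1)) \<le> S x" "S x \<le> S (max x 1)" by (auto intro: mono)
    moreover have "S (min x (-1)) = 0" "S (max x 1) = 1"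
      using Bi_lowe Bi_high cpos by (auto simp: S_def)
    ultimately show "0 \<le> S x \<and> S x \<le> 1" by simp
  qed
  ultimately show ?thesis by (intro exI[of _ S] exI[of _ s]) simp
qed

lemma bdd_L2:
  fixes fb :: "real \<Rightarrow> real"
  assumes L: "L2 fb" and K: "\<And>x y. \<bar>x - y\<bar> \<le> 1 \<Longrightarrow> \<bar>fb x - fb y\<bar> \<le> K"
  shows "\<bar>fb x\<bar> \<le> K + sqrt (LINT y|lborel. (fb y)^2) + 1"
proof (rule ccontr)
  define I where "I = (LINT y|lborel. (fb y)^2)"
  define m where "m = sqrt I + 1"
  assume "\<not> ?thesis"
  then have big: "\<bar>fb x\<bar> > K + m" by (simp add: I_def m_def)
  have I0: "I \<ge> 0" unfolding I_def by simp
  have m0: "m > 0" unfolding m_def using real_sqrt_ge_zero[OF I0] by linarith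
  have intI: "integrable lborel (\<lambda>y. (fb y)^2)" using L by (simp add: L2_def)
  have "indicator {x..x+1} y * m^2 \<le> (fb y)^2" for y
  proof (cases "y \<in> {x..x+1}")
    case True
    then have "\<bar>fb y - fb x\<bar> \<le> K" using K[of y x] by auto
    then have "\<bar>fb y\<bar> \<ge> m" using big by linarith
    then have "m^2 \<le> \<bar>fb y\<bar>^2" using m0 by (intro power_mono) auto
    then show ?thesis using True by simp
  qed simp
  then have "(LINT y|lborel. indicator {x..x+1} y * m^2) \<le> I"
    unfolding I_def by (intro integral_mono intI) (auto intro!: integrable_mult_left)
  moreover have "(LINT y|lborel. indicator {x..x+1} y * m^2) = m^2"
    by simp
  ultimately have "m^2 \<le> I" by simp
  moreover have "m^2 > I"
  proof -
    have "m^2 = I + 2 * sqrt I + 1" using I0 by (simp add: m_def power2_eq_square algebra_simps)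
    then show ?thesis using real_sqrt_ge_zero[OF I0] by linarith
  qed
  ultimately show False by simp
qed

lemma bdd_E2:
  assumes c: "cutoff psi" and E: "E2 psi f" and K: "\<And>x y. \<bar>x - y\<bar> \<le> 1 \<Longrightarrow> \<bar>f x - f y\<bar> \<le> K"
  shows "\<exists>B. \<forall>x. \<bar>f x\<bar> \<le> B"
proof -
  obtain fb a b where H: "H1 fb" and f: "\<And>x. f x = fb x + a * psi x + b * (1 - psi x)"
    using E unfolding E2_def by blast
  note P = cutoff_props[OF c]
  have ab: "\<bar>a * psi x + b * (1 - psi x)\<bar> \<le> \<bar>a\<bar> + \<bar>b\<bar>" for x
  proof -
    have "\<bar>a * psi x\<bar> \<le> \<bar>a\<bar>" using P(2,3)[of x] by (simp add: abs_mult mult_left_le)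
    moreover have "\<bar>b * (1 - psi x)\<bar> \<le> \<bar>b\<bar>" using P(2,3)[of x] by (simp add: abs_mult mult_left_le)
    ultimately show ?thesis by linarith
  qed
  have Kb: "\<bar>fb x - fb y\<bar> \<le> K + 2 * (\<bar>a\<bar> + \<bar>b\<bar>)" if "\<bar>x - y\<bar> \<le> 1" for x y
  proof -
    have "fb x - fb y = (f x - f y) - (a * psi x + b * (1 - psi x)) + (a * psi y + b * (1 - psi y))"
      using f[of x] f[of y] by simp
    then show ?thesis using K[OF that] ab[of x] ab[of y] by (smt (verit))
  qed
  have L: "L2 fb" using H by (simp add: H1_def)
  define B where "B = K + 2 * (\<bar>a\<bar> + \<bar>b\<bar>) + sqrt (LINT y|lborel. (fb y)^2) + 1 + \<bar>a\<bar> + \<bar>b\<bar>"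
  have "\<bar>f x\<bar> \<le> B" for x
    using bdd_L2[OF L Kb, of x] ab[of x] f[of x] unfolding B_def by linarith
  then show ?thesis by blast
qed

locale HSc =
  fixes S s :: "real \<Rightarrow> real" and mu :: "real \<Rightarrow> real measure" and u :: "real \<Rightarrow> real \<Rightarrow> real"
    and T D U t1 x0 R \<delta> :: real
  assumes smooth: "smooth1 S" and Sder: "\<And>x. (S has_real_derivative s x) (at x)"
    and scont: "continuous_on UNIV s" and s0: "\<And>x. 0 \<le> s x"
    and Slow: "\<And>x. x \<le> -1 \<Longrightarrow> S x = 0" and Shigh: "\<And>x. 1 \<le> x \<Longrightarrow> S x = 1"
    and ssupp: "\<And>x. s x \<noteq> 0 \<Longrightarrow> -1 < x \<and> x < 1" and S01: "\<And>x. 0 \<le> S x \<and> S x \<le> 1"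
    and sets_mu: "\<And>t. 0 \<le> t \<Longrightarrow> sets (mu t) = sets borel"
    and fin: "\<And>t. 0 \<le> t \<Longrightarrow> finite_measure (mu t)"
    and hold: "\<And>t t' x y. t \<in> {0..T} \<Longrightarrow> t' \<in> {0..T} \<Longrightarrow> \<bar>u t x - u t' y\<bar> \<le> D * sqrt (\<bar>t - t'\<bar> + \<bar>x - y\<bar>)"
    and Ub: "\<And>x. \<bar>u 0 x\<bar> \<le> U"
    and Dpos: "0 < D" and t1pos: "0 < t1" and t1T: "t1 \<le> T" and dpos: "0 < \<delta>"
    and csmall: "D * sqrt (2 * \<delta>) \<le> 1"
begin

definition "u0 = u 0 x0"
definition "a = sqrt t1"
definition "A = D * (3/4 * D * sqrt T + sqrt (2 + U))"
definition "c = D * sqrt (2 * \<delta>)"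
definition "\<epsilon> = \<delta> / 2"
definition "v = - (U + D * sqrt T)"
definition "y t = x0 + \<delta> + ((u0 + c) * t + A * (1 / (4 * a) * (t * t) + a / 2 * t))"
definition "yd t = u0 + c + A * (1 / (4 * a) * (t + t) + a / 2)"
definition "Y = y t1 + \<delta>"
definition "L = - R + v * T - 2"
definition "f x = max 0 (min 1 (min (x - L) ((Y - x) / (\<delta> / 2))))"

lemma U0: "0 \<le> U" using Ub[of 0] by linarith
lemma apos: "0 < a" using t1pos by (simp add: a_def)
lemma a_sq: "a * a = t1" using t1pos by (simp add: a_def)
lemma aT: "a \<le> sqrt T" using t1T by (simp add: a_def)
lemma T0: "0 < T" using t1pos t1T by linarith
lemma A0: "0 \<le> A" using Dpos U0 T0 by (simp add: A_def)
lemma c01: "0 \<le> c" "c \<le> 1" using Dpos dpos csmall by (auto simp: c_def)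
lemma u0U: "\<bar>u0\<bar> \<le> U" using Ub by (simp add: u0_def)

lemma y_deriv: "(y has_real_derivative yd t) (at t)"
  unfolding y_def yd_def using apos by (auto intro!: derivative_eq_intros simp: algebra_simps)

lemma y_t1: "y t1 = x0 + \<delta> + (u0 + c) * t1 + 3/4 * A * (t1 * sqrt t1)"
proof -
  have "1 / (4 * a) * (t1 * t1) = 1/4 * (t1 * sqrt t1)"
    using apos a_sq by (simp add: a_def field_simps)
  moreover have "a / 2 * t1 = 1/2 * (t1 * sqrt t1)" by (simp add: a_def)
  ultimately have "y t1 = x0 + \<delta> + ((u0 + c) * t1 + A * (1/4 * (t1 * sqrt t1) + 1/2 * (t1 * sqrt t1)))"
    unfolding y_def by simp
  then show ?thesis by (simp add: algebra_simps)
qed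

lemma u_lower: "t \<in> {0..T} \<Longrightarrow> v \<le> u t x"
proof -
  assume t: "t \<in> {0..T}"
  have "\<bar>u t x - u 0 x\<bar> \<le> D * sqrt t" using hold[OF t, of 0 x x] T0 t by simp
  moreover have "D * sqrt t \<le> D * sqrt T" using t Dpos by auto
  ultimately show ?thesis using Ub[of x] unfolding v_def by linarith
qed

lemma sqrt_le_mid: "0 \<le> t \<Longrightarrow> sqrt t \<le> 1 / (4 * a) * (t + t) + a / 2"
proof -
  assume t: "0 \<le> t"
  have "0 \<le> (sqrt t - a)^2" by simp
  then have "2 * a * sqrt t \<le> t + a * a" using t by (simp add: power2_eq_square algebra_simps)
  then have "sqrt t \<le> (t + a * a) / (2 * a)" using apos by (simp add: field_simps)
  also have "\<dots> = 1 / (4 * a) * (t + t) + a / 2" using apos by (simp add: field_simps)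
  finally show ?thesis .
qed

lemma Kc_bound: "D * sqrt (2 + U + 3/4 * A * sqrt T) \<le> A"
proof -
  define q where "q = 3/4 * D * sqrt T + sqrt (2 + U)"
  have q0: "0 \<le> q" using Dpos T0 U0 by (simp add: q_def)
  have sq1: "sqrt (2 + U) * sqrt (2 + U) = 2 + U" using U0 by simp
  have sq2: "sqrt T * sqrt T = T" using T0 by simp
  have "2 + U + 3/4 * A * sqrt T = 2 + U + 3/4 * D * sqrt T * q" by (simp add: A_def q_def)
  also have "\<dots> \<le> q * q"
  proof -
    have "q * q = (3/4 * D * sqrt T) * (3/4 * D * sqrt T) + 2 * (3/4 * D * sqrt T) * sqrt (2 + U) + (2 + U)"
      unfolding q_def using sq1 by (simp add: algebra_simps)
    moreover have "3/4 * D * sqrt T * q = (3/4 * D * sqrt T) * (3/4 * D * sqrt T) + (3/4 * D * sqrt T) * sqrt (2 + U)"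
      unfolding q_def by (simp add: algebra_simps)
    moreover have "0 \<le> (3/4 * D * sqrt T) * sqrt (2 + U)" using Dpos T0 U0 by simp
    ultimately show ?thesis by linarith
  qed
  finally have "sqrt (2 + U + 3/4 * A * sqrt T) \<le> q" using q0 by (intro real_le_lsqrt) (auto simp: power2_eq_square)
  then show ?thesis using Dpos by (simp add: A_def q_def)
qed

lemma u_upper:
  assumes t: "t \<in> {0..t1}" and x1: "y t - \<epsilon> < x" and x2: "x < y t"
  shows "u t x \<le> yd t"
proof -
  define Kc where "Kc = 2 + U + 3/4 * A * sqrt T"
  have t0: "0 \<le> t" "t \<le> t1" using t by auto
  have tT: "t \<in> {0..T}" using t t1T by auto
  have h1: "\<bar>u t x - u0\<bar> \<le> D * sqrt (t + \<bar>x - x0\<bar>)"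
    using hold[OF tT, of 0 x x0] T0 t0 by (simp add: u0_def)
  have p1: "\<bar>(u0 + c) * t\<bar> \<le> (U + 1) * t"
  proof -
    have "\<bar>u0 + c\<bar> \<le> U + 1" using u0U c01 by linarith
    then show ?thesis using t0 by (simp add: abs_mult mult_right_mono)
  qed
  have p2: "0 \<le> A * (1 / (4 * a) * (t * t) + a / 2 * t)" using A0 apos t0 by simp
  have p3: "A * (1 / (4 * a) * (t * t) + a / 2 * t) \<le> 3/4 * A * sqrt T * t"
  proof -
    have "t * t \<le> t1 * t" using t0 by (simp add: mult_right_mono)
    then have "1 / (4 * a) * (t * t) \<le> 1 / (4 * a) * (a * a * t)" using apos a_sq
      by (intro mult_left_mono) auto
    also have "\<dots> = a / 4 * t" using apos by (simp add: field_simps mult.commute)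
    finally have "1 / (4 * a) * (t * t) + a / 2 * t \<le> 3/4 * a * t" by linarith
    also have "\<dots> \<le> 3/4 * sqrt T * t" using mult_right_mono[OF aT t0(1)] by linarith
    finally have "1 / (4 * a) * (t * t) + a / 2 * t \<le> 3/4 * sqrt T * t" .
    from mult_left_mono[OF this A0] show ?thesis by (simp add: algebra_simps)
  qed
  have ye: "y t - x0 = \<delta> + (u0 + c) * t + A * (1 / (4 * a) * (t * t) + a / 2 * t)"
    by (simp add: y_def)
  have yb: "\<bar>y t - x0\<bar> \<le> \<delta> + (U + 1) * t + 3/4 * A * sqrt T * t"
    using p1 p2 p3 dpos ye by linarith
  have "\<bar>x - x0\<bar> \<le> \<bar>y t - x0\<bar> + \<epsilon>" using x1 x2 by linarith
  moreover have "Kc * t = 2 * t + U * t + 3/4 * A * sqrt T * t" "(U + 1) * t = U * t + t"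
    by (simp_all add: Kc_def algebra_simps)
  ultimately have "t + \<bar>x - x0\<bar> \<le> 2 * \<delta> + Kc * t" using yb dpos unfolding \<epsilon>_def
    by linarith
  then have "sqrt (t + \<bar>x - x0\<bar>) \<le> sqrt (2 * \<delta> + Kc * t)" by simp
  also have "\<dots> \<le> sqrt (2 * \<delta>) + sqrt (Kc * t)" by (rule sqrt_add_le_add_sqrt) (use dpos t0 U0 A0 T0 in \<open>auto simp: Kc_def\<close>)
  finally have "D * sqrt (t + \<bar>x - x0\<bar>) \<le> D * (sqrt (2 * \<delta>) + sqrt (Kc * t))"
    using Dpos by (intro mult_left_mono) auto
  then have "D * sqrt (t + \<bar>x - x0\<bar>) \<le> c + D * sqrt Kc * sqrt t"
    by (simp add: c_def real_sqrt_mult algebra_simps)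
  also have "D * sqrt Kc * sqrt t \<le> A * sqrt t" using Kc_bound unfolding Kc_def by (rule mult_right_mono) (simp add: t0)
  also have "A * sqrt t \<le> A * (1 / (4 * a) * (t + t) + a / 2)" using sqrt_le_mid[OF t0(1)] A0 by (rule mult_left_mono)
  finally show ?thesis using h1 unfolding yd_def by linarith
qed

lemma space_mu: "0 \<le> t \<Longrightarrow> space (mu t) = UNIV"
  using sets_eq_imp_space_eq[OF sets_mu] by simp

lemma int_bdd:
  fixes g :: "real \<Rightarrow> real" and K :: real
  assumes t: "0 \<le> t" and g: "continuous_on UNIV g" and K: "\<And>x. \<bar>g x\<bar> \<le> K"
  shows "integrable (mu t) g"
proof -
  interpret finite_measure "mu t" using fin[OF t] .
  have "g \<in> borel_measurable borel" using g by (rule borel_measurable_continuous_onI)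
  then have m: "g \<in> borel_measurable (mu t)" using measurable_cong_sets[OF sets_mu[OF t] refl, of borel] by auto
  show ?thesis by (rule integrable_const_bound[where B=K]) (use K m in auto)
qed

lemma int_ind:
  assumes t: "0 \<le> t"
  shows "integrable (mu t) (indicator {..<w} :: real \<Rightarrow> real)" and "(LINT x|mu t. indicator {..<w} x) = measure (mu t) {..<w}"
proof -
  interpret finite_measure "mu t" using fin[OF t] .
  have "{..<w} \<in> sets (mu t)" using sets_mu[OF t] by simp
  then show "integrable (mu t) (indicator {..<w} :: real \<Rightarrow> real)"
    by (intro integrable_real_indicator) (auto simp: less_top[symmetric])
  show "(LINT x|mu t. indicator {..<w} x) = measure (mu t) {..<w}" using space_mu[OF t] by simp
qed

lemma int_indI:
  assumes t: "0 \<le> t"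
  shows "integrable (mu t) (indicator {p..<q} :: real \<Rightarrow> real)" and "(LINT x|mu t. indicator {p..<q} x) = measure (mu t) {p..<q}"
proof -
  interpret finite_measure "mu t" using fin[OF t] .
  have "{p..<q} \<in> sets (mu t)" using sets_mu[OF t] by simp
  then show "integrable (mu t) (indicator {p..<q} :: real \<Rightarrow> real)"
    by (intro integrable_real_indicator) (auto simp: less_top[symmetric])
  show "(LINT x|mu t. indicator {p..<q} x) = measure (mu t) {p..<q}" using space_mu[OF t] by simp
qed

lemma f_cont: "continuous_on UNIV f"
  unfolding f_def[abs_def] using dpos by (intro continuous_intros) auto

lemma f01: "0 \<le> f x" "f x \<le> 1" by (auto simp: f_def)

lemma f_nz: "f x \<noteq> 0 \<Longrightarrow> L < x \<and> x < Y"
proof -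
  assume "f x \<noteq> 0"
  then have "0 < x - L" "0 < (Y - x) / (\<delta> / 2)" by (auto simp: f_def)
  then show ?thesis using dpos by (auto simp: zero_less_divide_iff)
qed

lemma f_supp: "compact (closure {x. f x \<noteq> 0})"
proof -
  have "{x. f x \<noteq> 0} \<subseteq> {L..Y}" using f_nz by force
  then have "bounded {x. f x \<noteq> 0}" by (rule bounded_subset[OF bounded_closed_interval])
  then show ?thesis by simp
qed

lemma f_one: "L + 1 \<le> x \<Longrightarrow> x \<le> Y - \<delta> / 2 \<Longrightarrow> f x = 1"
proof -
  assume "L + 1 \<le> x" "x \<le> Y - \<delta> / 2"
  moreover have "1 \<le> (Y - x) / (\<delta> / 2)" using dpos \<open>x \<le> Y - \<delta> / 2\<close> by (simp add: field_simps)
  ultimately show "f x = 1" by (simp add: f_def)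
qed

lemma f_le_ind: "f x \<le> indicator {..<Y} x"
  using f_nz[of x] f01[of x] by (cases "f x = 0") (auto simp: indicator_def)

lemma intf_t1: "(LINT x|mu t1. f x) \<le> measure (mu t1) {..<Y}"
proof -
  have t: "0 \<le> t1" using t1pos by simp
  have "(LINT x|mu t1. f x) \<le> (LINT x|mu t1. indicator {..<Y} x)"
    by (rule integral_mono[OF int_bdd[OF t f_cont, of 1] int_ind(1)[OF t]])
       (use f01 f_le_ind in auto)
  then show ?thesis using int_ind(2)[OF t] by simp
qed

lemma y_win: "0 \<le> t \<Longrightarrow> t1 - h \<le> t \<Longrightarrow> t \<le> t1 \<Longrightarrow> y t \<le> y t1 + (U + 1) * h"
proof -
  assume t: "0 \<le> t" "t1 - h \<le> t" "t \<le> t1"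
  have "y t1 - y t = (u0 + c) * (t1 - t) + A * (1 / (4 * a) * (t1 * t1 - t * t) + a / 2 * (t1 - t))"
    using apos by (simp add: y_def field_simps)
  moreover have "0 \<le> A * (1 / (4 * a) * (t1 * t1 - t * t) + a / 2 * (t1 - t))"
  proof -
    have "t * t \<le> t1 * t1" using t by (intro mult_mono) auto
    then show ?thesis using A0 apos t by simp
  qed
  moreover have "- (U + 1) * h \<le> (u0 + c) * (t1 - t)"
  proof -
    have "-(U + 1) \<le> u0 + c" using u0U c01 by linarith
    have "- (U + 1) * h \<le> - (U + 1) * (t1 - t)" using t U0 by (simp add: mult_left_mono)
    also have "\<dots> \<le> (u0 + c) * (t1 - t)" using \<open>-(U + 1) \<le> u0 + c\<close> t by (intro mult_right_mono) auto
    finally show ?thesis .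
  qed
  ultimately show ?thesis by (simp add: algebra_simps) linarith?
qed

end

locale HSc2 = HSc +
  fixes h B :: real
  assumes hpos: "0 < h" and ht1: "h \<le> t1" and hsmall: "(U + 1) * h \<le> \<delta> / 2"
    and fbound: "\<And>t. 0 \<le> t \<Longrightarrow> t1 - h < t \<Longrightarrow> t < t1 \<Longrightarrow> (LINT x|mu t. f x) \<le> B"
    and B0: "0 \<le> B"
    and weak: "\<And>phi. test_fun phi \<Longrightarrow> (LINT t:{0..}|lborel. LINT x|mu t. d_t phi t x + u t x * d_x phi t x)
                 = - (LINT x|mu 0. phi (0, x))"
begin

definition "a2 t = -2/h * t + (2*t1/h - 1)"
definition "a3 t x = 2 * x + (- (2 * v) * t + (2 * R + 1))"
definition "a4 t x = 2/\<epsilon> * x + (-2/\<epsilon> * y t + 1)"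
definition "phi = (\<lambda>(t, x). S (t + 2) * S (a2 t) * S (a3 t x) * (1 + -1 * S (a4 t x)))"
definition "gg t x = S (a3 t x) * (1 + -1 * S (a4 t x))"
definition "chi' t = -2/h * s (a2 t)"

definition "Ey = Ad (C (x0+\<delta>)) (Ad (Mu (C (u0+c)) Vt) (Mu (C A) (Ad (Mu (C (1/(4*a))) (Mu Vt Vt)) (Mu (C (a/2)) Vt))))"
definition "EE = Mu (Mu (Mu (Cp S 0 (Ad Vt (C 2))) (Cp S 0 (Ad (Mu (C (-2/h)) Vt) (C (2*t1/h - 1)))))
     (Cp S 0 (Ad (Mu (C 2) Vx) (Ad (Mu (C (- (2 * v))) Vt) (C (2*R+1))))))
     (Ad (C 1) (Mu (C (-1)) (Cp S 0 (Ad (Mu (C (2/\<epsilon>)) Vx) (Ad (Mu (C (-2/\<epsilon>)) Ey) (C 1))))))"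

lemma ev_EE: "ev EE = phi"
  by (auto simp: fun_eq_iff EE_def Ey_def phi_def a2_def a3_def a4_def y_def)

lemma eps_pos: "0 < \<epsilon>" using dpos by (simp add: \<epsilon>_def)
lemma v_nonpos: "v \<le> 0"
proof -
  have "0 \<le> D * sqrt T" using Dpos T0 by simp
  then show ?thesis using U0 by (simp add: v_def)
qed

lemma S_nz: "S z \<noteq> 0 \<Longrightarrow> -1 < z" using Slow[of z] by force
lemma S_n1: "S z \<noteq> 1 \<Longrightarrow> z < 1" using Shigh[of z] by force
lemma s_out: "z \<le> -1 \<or> 1 \<le> z \<Longrightarrow> s z = 0" using ssupp[of z] by force

lemma y_bound:
  assumes "-3 \<le> t" "t \<le> t1"
  shows "y t \<le> x0 + \<delta> + \<bar>u0 + c\<bar> * (3 + t1) + A * (1 / (4 * a) * ((3 + t1) * (3 + t1)) + a / 2 * (3 + t1))"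
proof -
  have at: "\<bar>t\<bar> \<le> 3 + t1" using assms t1pos by linarith
  have "(u0 + c) * t \<le> \<bar>u0 + c\<bar> * (3 + t1)"
  proof -
    have "(u0 + c) * t \<le> \<bar>(u0 + c) * t\<bar>" by simp
    also have "\<dots> = \<bar>u0 + c\<bar> * \<bar>t\<bar>" by (simp add: abs_mult)
    also have "\<dots> \<le> \<bar>u0 + c\<bar> * (3 + t1)" using at by (intro mult_left_mono) auto
    finally show ?thesis .
  qed
  moreover have "1 / (4 * a) * (t * t) + a / 2 * t \<le> 1 / (4 * a) * ((3 + t1) * (3 + t1)) + a / 2 * (3 + t1)"
  proof -
    have "t * t = \<bar>t\<bar> * \<bar>t\<bar>" by (simp add: abs_mult[symmetric])
    also have "\<dots> \<le> (3 + t1) * (3 + t1)" using at by (intro mult_mono) auto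
    finally have "1 / (4 * a) * (t * t) \<le> 1 / (4 * a) * ((3 + t1) * (3 + t1))" using apos
      by (intro mult_left_mono) auto
    moreover have "a / 2 * t \<le> a / 2 * (3 + t1)" using at apos by (intro mult_left_mono) auto
    ultimately show ?thesis by linarith
  qed
  then have "A * (1 / (4 * a) * (t * t) + a / 2 * t) \<le> A * (1 / (4 * a) * ((3 + t1) * (3 + t1)) + a / 2 * (3 + t1))"
    using A0 by (rule mult_left_mono)
  ultimately show ?thesis unfolding y_def by linarith
qed

lemma phi_test: "test_fun phi"
  unfolding test_fun_def
proof
  show "smooth2 phi" unfolding ev_EE[symmetric]
    by (rule smooth2_ev) (simp add: EE_def Ey_def smooth)
  define Ym where "Ym = x0 + \<delta> + \<bar>u0 + c\<bar> * (3 + t1) + A * (1 / (4 * a) * ((3 + t1) * (3 + t1)) + a / 2 * (3 + t1))"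
  have "{p. phi p \<noteq> 0} \<subseteq> {-3..t1} \<times> {v * t1 - R - 1..Ym}"
  proof
    fix p assume "p \<in> {p. phi p \<noteq> 0}"
    then obtain t x where p: "p = (t, x)" and nz: "S (t + 2) \<noteq> 0" "S (a2 t) \<noteq> 0" "S (a3 t x) \<noteq> 0"
      "S (a4 t x) \<noteq> 1" by (cases p) (auto simp: phi_def)
    have t1': "-3 < t" using S_nz[OF nz(1)] by linarith
    have "-1 < a2 t" using S_nz[OF nz(2)] .
    then have t2: "t < t1" using hpos by (simp add: a2_def field_simps)
    have "-1 < a3 t x" using S_nz[OF nz(3)] .
    then have "v * t - R - 1 < x" by (simp add: a3_def algebra_simps)
    moreover have "v * t1 \<le> v * t" using v_nonpos t2 by (intro mult_left_mono_neg) auto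
    ultimately have x1: "v * t1 - R - 1 \<le> x" by linarith
    have "a4 t x < 1" using S_n1[OF nz(4)] .
    then have "x < y t" using eps_pos by (simp add: a4_def field_simps)
    then have x2: "x \<le> Ym" using y_bound[of t] t1' t2 unfolding Ym_def by linarith
    show "p \<in> {-3..t1} \<times> {v * t1 - R - 1..Ym}" using p t1' t2 x1 x2 by auto
  qed
  then have "bounded {p. phi p \<noteq> 0}"
    by (rule bounded_subset[OF bounded_Times[OF bounded_closed_interval bounded_closed_interval]])
  then show "compact (closure {p. phi p \<noteq> 0})" by simp
qed

definition "Dtphi t x = s (t + 2) * S (a2 t) * S (a3 t x) * (1 + -1 * S (a4 t x))
   + S (t + 2) * (s (a2 t) * (-2/h)) * S (a3 t x) * (1 + -1 * S (a4 t x))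
   + S (t + 2) * S (a2 t) * (s (a3 t x) * (- (2 * v))) * (1 + -1 * S (a4 t x))
   + S (t + 2) * S (a2 t) * S (a3 t x) * (-1 * (s (a4 t x) * (-2/\<epsilon> * yd t)))"
definition "Dxphi t x = S (t + 2) * S (a2 t) * (s (a3 t x) * 2 * (1 + -1 * S (a4 t x))
   + S (a3 t x) * (-1 * (s (a4 t x) * (2/\<epsilon>))))"

lemma SDe: "(g has_real_derivative g') (at t) \<Longrightarrow> Dd = s (g t) * g' \<Longrightarrow> ((\<lambda>t. S (g t)) has_real_derivative Dd) (at t)"
  using DERIV_chain2[OF Sder] by auto

lemma yde: "Dd = yd t \<Longrightarrow> (y has_real_derivative Dd) (at t)" using y_deriv by simp

lemma da2: "((\<lambda>t. a2 t) has_real_derivative -2/h) (at t)"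
  unfolding a2_def using hpos by (auto intro!: derivative_eq_intros)
lemma da3: "((\<lambda>t. a3 t x) has_real_derivative - (2 * v)) (at t)"
  unfolding a3_def by (auto intro!: derivative_eq_intros)
lemma da4: "((\<lambda>t. a4 t x) has_real_derivative -2/\<epsilon> * yd t) (at t)"
  unfolding a4_def using eps_pos by (auto intro!: derivative_eq_intros yde)
lemma dx3: "((\<lambda>x. a3 t x) has_real_derivative 2) (at x)"
  unfolding a3_def by (auto intro!: derivative_eq_intros)
lemma dx4: "((\<lambda>x. a4 t x) has_real_derivative 2/\<epsilon>) (at x)"
  unfolding a4_def using eps_pos by (auto intro!: derivative_eq_intros)
lemma d2: "((\<lambda>t. t + 2) has_real_derivative 1) (at t)"
  by (auto intro!: derivative_eq_intros)

lemma phi_dt: "((\<lambda>t. phi (t, x)) has_real_derivative Dtphi t x) (at t)"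
proof -
  have "((\<lambda>t. S (t + 2) * S (a2 t) * S (a3 t x) * (1 + -1 * S (a4 t x))) has_real_derivative Dtphi t x) (at t)"
    unfolding Dtphi_def
    by (auto intro!: derivative_eq_intros SDe[OF d2] SDe[OF da2] SDe[OF da3] SDe[OF da4] simp: algebra_simps diff_divide_distrib[symmetric] add_divide_distrib[symmetric])
  then show ?thesis by (simp add: phi_def)
qed

lemma phi_dx: "((\<lambda>x. phi (t, x)) has_real_derivative Dxphi t x) (at x)"
proof -
  have "((\<lambda>x. S (t + 2) * S (a2 t) * S (a3 t x) * (1 + -1 * S (a4 t x))) has_real_derivative Dxphi t x) (at x)"
    unfolding Dxphi_def
    by (auto intro!: derivative_eq_intros SDe[OF dx3] SDe[OF dx4] simp: algebra_simps)
  then show ?thesis by (simp add: phi_def)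
qed

lemma d_t_phi: "d_t phi t x = Dtphi t x"
  unfolding d_t_def using phi_dt by (rule DERIV_imp_deriv)

lemma d_x_phi: "d_x phi t x = Dxphi t x"
  unfolding d_x_def using phi_dx by (rule DERIV_imp_deriv)

lemma integrand_ge:
  assumes t: "0 \<le> t"
  shows "chi' t * gg t x \<le> Dtphi t x + u t x * Dxphi t x"
proof -
  have st: "s (t + 2) = 0" using s_out[of "t + 2"] t by simp
  have St: "S (t + 2) = 1" using Shigh[of "t + 2"] t by simp
  define P2 where "P2 = S (a2 t)"
  define Z where "Z = S (a3 t x)"
  define z where "z = s (a3 t x)"
  define N where "N = 1 + -1 * S (a4 t x)"
  define n where "n = s (a4 t x)"
  have eq: "Dtphi t x + u t x * Dxphi t x = chi' t * gg t x + 2 * P2 * z * N * (u t x - v)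
      + 2 / \<epsilon> * P2 * Z * n * (yd t - u t x)"
    unfolding Dtphi_def Dxphi_def chi'_def gg_def P2_def Z_def z_def N_def n_def st St
    using hpos eps_pos by (simp add: field_simps)
  have P20: "0 \<le> P2" "0 \<le> Z" "0 \<le> z" "0 \<le> N" "0 \<le> n"
    using S01 s0 by (auto simp: P2_def Z_def z_def N_def n_def)
  show ?thesis
  proof (cases "t1 \<le> t")
    case True
    have "a2 t \<le> -1" using True hpos by (simp add: a2_def field_simps)
    then have "P2 = 0" using Slow by (simp add: P2_def)
    then show ?thesis using eq by simp
  next
    case False
    have tT: "t \<in> {0..T}" using False t t1T by auto
    have "0 \<le> 2 * P2 * z * N * (u t x - v)" using P20 u_lower[OF tT, of x] by simp
    moreover have "0 \<le> 2 / \<epsilon> * P2 * Z * n * (yd t - u t x)"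
    proof (cases "n = 0")
      case True then show ?thesis by simp
    next
      case nz: False
      have "-1 < a4 t x \<and> a4 t x < 1" using ssupp nz by (simp add: n_def)
      then have "y t - \<epsilon> < x" "x < y t" using eps_pos by (auto simp: a4_def field_simps)
      then have "u t x \<le> yd t" using u_upper[of t x] False t by auto
      then show ?thesis using P20 eps_pos by simp
    qed
    ultimately show ?thesis using eq by linarith
  qed
qed

lemma S_cont: "continuous_on UNIV S"
  using Sder by (auto intro!: continuous_at_imp_continuous_on DERIV_isCont)

lemma S_comp_cont: "continuous_on W g \<Longrightarrow> continuous_on W (\<lambda>x. S (g x))"
  using continuous_on_compose2[OF S_cont, of W g] by auto

lemma gg_cont: "continuous_on UNIV (gg t)"
  unfolding gg_def[abs_def] a3_def a4_def by (intro continuous_intros S_comp_cont)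

lemma gg01: "0 \<le> gg t x" "gg t x \<le> 1"
proof -
  have "0 \<le> S (a3 t x)" "S (a3 t x) \<le> 1" "0 \<le> 1 + -1 * S (a4 t x)" "1 + -1 * S (a4 t x) \<le> 1"
    using S01 by auto
  then show "0 \<le> gg t x" "gg t x \<le> 1" unfolding gg_def by (auto intro: mult_le_one)
qed

lemma gg_int: "0 \<le> t \<Longrightarrow> integrable (mu t) (gg t)"
  using int_bdd[of t "gg t" 1] gg_cont gg01 by auto

lemma a2_eq: "a2 t = 2 * ((t1 - t) / h) - 1"
  using hpos by (simp add: a2_def field_simps)

lemma a2_win: "-1 < a2 t \<Longrightarrow> a2 t < 1 \<Longrightarrow> t1 - h < t \<and> t < t1"
proof -
  assume as: "-1 < a2 t" "a2 t < 1"
  have "0 < (t1 - t) / h" "(t1 - t) / h < 1" using as a2_eq[of t] by linarith+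
  then show ?thesis using hpos by (auto simp: zero_less_divide_iff divide_less_eq)
qed

lemma chi'_le0: "chi' t \<le> 0" using s0 hpos by (simp add: chi'_def)

lemma gg_le_f:
  assumes t: "0 \<le> t" "t1 - h < t" "t < t1"
  shows "gg t x \<le> f x"
proof (cases "gg t x = 0")
  case True then show ?thesis using f01 by simp
next
  case False
  then have nz: "S (a3 t x) \<noteq> 0" "S (a4 t x) \<noteq> 1" by (auto simp: gg_def)
  have "-1 < a3 t x" using S_nz[OF nz(1)] .
  then have "v * t - R - 1 < x" by (simp add: a3_def algebra_simps)
  moreover have "v * T \<le> v * t" using v_nonpos t t1T by (intro mult_left_mono_neg) auto
  ultimately have x1: "L + 1 \<le> x" by (simp add: L_def)
  have "a4 t x < 1" using S_n1[OF nz(2)] .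
  then have "x < y t" using eps_pos by (simp add: a4_def field_simps)
  moreover have "y t \<le> y t1 + (U + 1) * h" using y_win[of t h] t by simp
  ultimately have x2: "x \<le> Y - \<delta> / 2" using hsmall by (simp add: Y_def)
  show ?thesis using f_one[OF x1 x2] gg01 by simp
qed

lemma K_ge:
  assumes t: "0 \<le> t"
  shows "chi' t * B \<le> (LINT x|mu t. d_t phi t x + u t x * d_x phi t x)"
proof -
  have eqK: "(LINT x|mu t. d_t phi t x + u t x * d_x phi t x) = (LINT x|mu t. Dtphi t x + u t x * Dxphi t x)"
    by (simp add: d_t_phi d_x_phi)
  have gB: "chi' t * B \<le> chi' t * (LINT x|mu t. gg t x)"
  proof (cases "chi' t = 0")
    case True then show ?thesis by simp
  next
    case False
    then have "s (a2 t) \<noteq> 0" by (simp add: chi'_def)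
    then have "-1 < a2 t \<and> a2 t < 1" using ssupp by simp
    then have w: "t1 - h < t" "t < t1" using a2_win by auto
    have "(LINT x|mu t. gg t x) \<le> (LINT x|mu t. f x)"
      by (rule integral_mono[OF gg_int[OF t] int_bdd[OF t f_cont, of 1]]) (use f01 gg_le_f[OF t w] in auto)
    also have "\<dots> \<le> B" using fbound[OF t w] .
    finally show ?thesis using chi'_le0 by (rule mult_left_mono_neg)
  qed
  show ?thesis
  proof (cases "integrable (mu t) (\<lambda>x. Dtphi t x + u t x * Dxphi t x)")
    case True
    have "chi' t * (LINT x|mu t. gg t x) = (LINT x|mu t. chi' t * gg t x)" by simp
    also have "\<dots> \<le> (LINT x|mu t. Dtphi t x + u t x * Dxphi t x)"
      by (rule integral_mono[OF _ True]) (use gg_int[OF t] integrand_ge[OF t] in auto)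
    finally show ?thesis using gB eqK by simp
  next
    case False
    then have "(LINT x|mu t. Dtphi t x + u t x * Dxphi t x) = 0" by (rule not_integrable_integral_eq)
    moreover have "chi' t * B \<le> 0" using chi'_le0 B0 by (simp add: mult_nonpos_nonneg)
    ultimately show ?thesis using eqK by simp
  qed
qed

lemma s_comp_cont: "continuous_on W g \<Longrightarrow> continuous_on W (\<lambda>x. s (g x))"
  using continuous_on_compose2[OF scont, of W g] by auto

lemma chi'_cont: "continuous_on W chi'"
  unfolding chi'_def[abs_def] a2_def by (intro continuous_intros s_comp_cont)

lemma chi'_zero: "t1 \<le> t \<Longrightarrow> chi' t = 0"
proof -
  assume "t1 \<le> t"
  then have "(t1 - t) / h \<le> 0" using hpos by (simp add: divide_le_0_iff)
  then have "a2 t \<le> -1" using a2_eq[of t] by linarith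
  then show ?thesis using s_out by (simp add: chi'_def)
qed

lemma chi_int: "set_integrable lborel {0..} (\<lambda>t. chi' t * B)"
  and chi_int_eq: "(LINT t:{0..}|lborel. chi' t * B) = - B"
proof -
  have ind: "(\<lambda>t. indicator {0..} t *\<^sub>R (chi' t * B)) = (\<lambda>t. indicator {0..t1} t *\<^sub>R (chi' t * B))"
  proof
    fix t :: real
    show "indicator {0..} t *\<^sub>R (chi' t * B) = indicator {0..t1} t *\<^sub>R (chi' t * B)"
      using chi'_zero[of t] by (cases "t1 \<le> t") (auto simp: indicator_def)
  qed
  have si: "set_integrable lborel {0..t1} (\<lambda>t. chi' t * B)"
    by (rule borel_integrable_atLeastAtMost') (intro continuous_intros chi'_cont)
  then show "set_integrable lborel {0..} (\<lambda>t. chi' t * B)"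
    unfolding set_integrable_def ind .
  have "(LINT t:{0..}|lborel. chi' t * B) = (LINT t:{0..t1}|lborel. chi' t * B)"
    unfolding set_lebesgue_integral_def ind ..
  also have "\<dots> = (LBINT t=ereal 0..ereal t1. chi' t * B)"
    by (rule interval_integral_Icc[symmetric]) (use t1pos in simp)
  also have "\<dots> = B * S (a2 t1) - B * S (a2 0)"
  proof (rule interval_integral_FTC_finite)
    show "continuous_on {min 0 t1..max 0 t1} (\<lambda>t. chi' t * B)"
      by (intro continuous_intros chi'_cont)
    fix t
    have "((\<lambda>t. B * S (a2 t)) has_real_derivative B * (s (a2 t) * (-2/h))) (at t)"
      by (intro DERIV_cmult SDe[OF da2] refl)
    then have "((\<lambda>t. B * S (a2 t)) has_real_derivative chi' t * B) (at t)"
      by (simp add: chi'_def algebra_simps)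
    then show "((\<lambda>t. B * S (a2 t)) has_vector_derivative chi' t * B) (at t within {min 0 t1..max 0 t1})"
      by (simp add: has_real_derivative_iff_has_vector_derivative has_vector_derivative_at_within)
  qed
  also have "S (a2 t1) = 0" using Slow[of "a2 t1"] a2_eq[of t1] by simp
  also have "S (a2 0) = 1"
  proof -
    have "1 \<le> t1 / h" using ht1 hpos by simp
    then have "1 \<le> a2 0" using a2_eq[of 0] by simp
    then show ?thesis using Shigh by simp
  qed
  finally show "(LINT t:{0..}|lborel. chi' t * B) = - B" by simp
qed

lemma G0_le: "(LINT x|mu 0. phi (0, x)) \<le> B"
proof (cases "set_integrable lborel {0..} (\<lambda>t. LINT x|mu t. d_t phi t x + u t x * d_x phi t x)")
  case True
  have "- B = (LINT t:{0..}|lborel. chi' t * B)" using chi_int_eq by simp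
  also have "\<dots> \<le> (LINT t:{0..}|lborel. LINT x|mu t. d_t phi t x + u t x * d_x phi t x)"
    by (rule set_integral_mono[OF chi_int True]) (use K_ge in auto)
  also have "\<dots> = - (LINT x|mu 0. phi (0, x))" by (rule weak[OF phi_test])
  finally show ?thesis by simp
next
  case False
  then have "(LINT t:{0..}|lborel. LINT x|mu t. d_t phi t x + u t x * d_x phi t x) = 0"
    unfolding set_integrable_def set_lebesgue_integral_def by (rule not_integrable_integral_eq)
  then have "(LINT x|mu 0. phi (0, x)) = 0" using weak[OF phi_test] by simp
  then show ?thesis using B0 by simp
qed

lemma phi0_cont: "continuous_on UNIV (\<lambda>x. phi (0, x))"
  unfolding phi_def a2_def a3_def a4_def
  apply simp
  apply (intro continuous_intros S_comp_cont)
  using eps_pos by auto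

lemma phi01: "0 \<le> phi p" "phi p \<le> 1"
proof -
  obtain t x where p: "p = (t, x)" by (cases p)
  have "0 \<le> 1 + -1 * S (a4 t x)" "1 + -1 * S (a4 t x) \<le> 1" using S01 by auto
  then show "0 \<le> phi p" "phi p \<le> 1" unfolding p phi_def using S01
    by (auto intro!: mult_le_one mult_nonneg_nonneg)
qed

lemma ind_le_phi0: "indicator {-R..<x0 + \<delta>/2} x \<le> phi (0, x)"
proof (cases "x \<in> {-R..<x0 + \<delta>/2}")
  case True
  have "S (0 + 2) = 1" using Shigh by simp
  moreover have "S (a2 0) = 1"
  proof -
    have "1 \<le> t1 / h" using ht1 hpos by simp
    then have "1 \<le> a2 0" using a2_eq[of 0] by simp
    then show ?thesis using Shigh by simp
  qed
  moreover have "S (a3 0 x) = 1" using True Shigh by (simp add: a3_def)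
  moreover have "S (a4 0 x) = 0"
  proof -
    have "y 0 = x0 + \<delta>" by (simp add: y_def)
    then have "a4 0 x = 2 / \<epsilon> * (x - (x0 + \<delta>)) + 1" using eps_pos by (simp add: a4_def field_simps)
    moreover have "2 / \<epsilon> * (x - (x0 + \<delta>)) < -2"
    proof -
      have "x - (x0 + \<delta>) < - \<epsilon>" using True by (simp add: \<epsilon>_def)
      then have "2 / \<epsilon> * (x - (x0 + \<delta>)) < 2 / \<epsilon> * (- \<epsilon>)" using eps_pos
        by (intro mult_strict_left_mono) auto
      then show ?thesis using eps_pos by simp
    qed
    ultimately show ?thesis using Slow by simp
  qed
  ultimately show ?thesis using True by (simp add: phi_def)
qed (simp add: phi01)

lemma final_core: "measure (mu 0) {-R..<x0 + \<delta>/2} \<le> B"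
proof -
  have "measure (mu 0) {-R..<x0 + \<delta>/2} = (LINT x|mu 0. indicator {-R..<x0 + \<delta>/2} x)"
    using int_indI(2)[of 0] by simp
  also have "\<dots> \<le> (LINT x|mu 0. phi (0, x))"
    by (rule integral_mono[OF int_indI(1) int_bdd[OF _ phi0_cont, of 0 1]]) (use ind_le_phi0 phi01 in auto)
  also have "\<dots> \<le> B" by (rule G0_le)
  finally show ?thesis .
qed

end

context HSc
begin

lemma core_bound:
  assumes weak: "\<And>phi. test_fun phi \<Longrightarrow> (LINT t:{0..}|lborel. LINT x|mu t. d_t phi t x + u t x * d_x phi t x)
                 = - (LINT x|mu 0. phi (0, x))"
    and vague: "\<And>g. continuous_on UNIV g \<Longrightarrow> compact (closure {x. g x \<noteq> (0::real)}) \<Longrightarrow>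
                  continuous_on {0..} (\<lambda>t. LINT x|mu t. g x)"
    and e: "0 < e"
  shows "measure (mu 0) {-R..<x0 + \<delta>/2} \<le> measure (mu t1) {..<Y} + e"
proof -
  have "continuous_on {0..} (\<lambda>t. LINT x|mu t. f x)" by (rule vague[OF f_cont f_supp])
  then obtain h0 where h0: "h0 > 0" and h0p: "\<And>t. t \<in> {0..} \<Longrightarrow> dist t t1 < h0 \<Longrightarrow>
      dist (LINT x|mu t. f x) (LINT x|mu t1. f x) < e"
    using e t1pos unfolding continuous_on_iff by (metis atLeast_iff less_imp_le)
  define h where "h = min (min (h0/2) t1) (\<delta> / (2 * (U + 1)))"
  define B where "B = measure (mu t1) {..<Y} + e"
  have hpos: "0 < h" using h0 t1pos dpos U0 by (simp add: h_def)
  have ht1: "h \<le> t1" by (simp add: h_def)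
  have hsmall: "(U + 1) * h \<le> \<delta> / 2"
  proof -
    have "h \<le> \<delta> / (2 * (U + 1))" by (simp add: h_def)
    then have "(U + 1) * h \<le> (U + 1) * (\<delta> / (2 * (U + 1)))" using U0 by (intro mult_left_mono) auto
    also have "\<dots> = \<delta> / 2" using U0 by (simp add: field_simps)
    finally show ?thesis .
  qed
  have B0: "0 \<le> B" using e by (simp add: B_def)
  have fbound: "(LINT x|mu t. f x) \<le> B" if "0 \<le> t" "t1 - h < t" "t < t1" for t
  proof -
    have "dist t t1 < h0" using that h0 unfolding dist_real_def h_def by auto
    then have "dist (LINT x|mu t. f x) (LINT x|mu t1. f x) < e" using h0p that by auto
    then have "(LINT x|mu t. f x) < (LINT x|mu t1. f x) + e" by (simp add: dist_real_def abs_less_iff)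
    then show ?thesis using intf_t1 by (simp add: B_def)
  qed
  interpret H2: HSc2 S s mu u T D U t1 x0 R \<delta> h B
    by unfold_locales (use hpos ht1 hsmall fbound B0 weak in auto)
  show ?thesis using H2.final_core by (simp add: B_def)
qed

end

lemma measure_lessThan_lim:
  assumes fm: "finite_measure M" and sm: "sets M = sets borel" and b: "\<And>n::nat. measure M {- real n..<w} \<le> Cb"
  shows "measure M {..<w} \<le> Cb"
proof -
  interpret finite_measure M by (rule fm)
  define An where "An n = {- real n..<w}" for n
  have L0: "(\<lambda>n. measure M (An n)) \<longlonglongrightarrow> measure M (\<Union> (range An))"
  proof (rule finite_Lim_measure_incseq)
    show "range An \<subseteq> sets M" unfolding sm An_def by auto
    show "incseq An" unfolding incseq_def An_def
    proof (intro allI impI subsetI)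
      fix m n :: nat and x assume "m \<le> n" "x \<in> {- real m..<w}"
      then show "x \<in> {- real n..<w}" by auto
    qed
  qed
  have U: "\<Union> (range An) = {..<w}"
  proof (rule set_eqI)
    fix z :: real
    show "z \<in> \<Union> (range An) \<longleftrightarrow> z \<in> {..<w}"
    proof
      assume "z \<in> \<Union> (range An)"
      then obtain n where "z \<in> An n" by blast
      then show "z \<in> {..<w}" by (simp add: An_def)
    next
      assume z: "z \<in> {..<w}"
      obtain n :: nat where n: "- z \<le> real n" using real_arch_simple by blast
      have "z \<in> An n" using z n by (simp add: An_def)
      then show "z \<in> \<Union> (range An)" by blast
    qed
  qed
  have L: "(\<lambda>n. measure M (An n)) \<longlonglongrightarrow> measure M {..<w}" using L0 unfolding U .
  show ?thesis by (rule LIMSEQ_le_const2[OF L]) (use b in \<open>auto simp: An_def\<close>)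
qed

theorem lemma3p3:
  fixes psi :: "real \<Rightarrow> real"
  assumes "cutoff psi"
  shows "\<exists>Mf :: real \<Rightarrow> real \<Rightarrow> real \<Rightarrow> real. (\<forall>a b c. 0 < Mf a b c) \<and>
    (\<forall>u mu T D. HS_weak_cons_sol psi u mu \<and> T > 0 \<and> D > 0 \<and>
       (\<forall>t\<in>{0..T}. \<forall>s\<in>{0..T}. \<forall>x y. \<bar>u t x - u s y\<bar> \<le> D * (\<bar>t - s\<bar> + \<bar>x - y\<bar>) powr (1/2))
     \<longrightarrow> (\<forall>X :: real \<Rightarrow> real.
            (\<forall>t\<in>{0..T}. (X has_real_derivative u t (X t)) (at t within {0..T}))
          \<longrightarrow> (\<forall>t\<in>{0..T}. Fplus mu 0 (X 0)
                 \<le> Fplus mu t (X 0 + u 0 (X 0) * t + Mf D T (SUP x. \<bar>u 0 x\<bar>) * t powr (3/2)))))"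
proof -
  obtain S s where SP: "smooth1 S" "\<forall>x. (S has_real_derivative s x) (at x)" "continuous_on UNIV s"
     "\<forall>x. 0 \<le> s x" "\<forall>x. x \<le> -1 \<longrightarrow> S x = 0" "\<forall>x. 1 \<le> x \<longrightarrow> S x = 1"
     "\<forall>x. s x \<noteq> 0 \<longrightarrow> -1 < x \<and> x < 1" "\<forall>x. 0 \<le> S x \<and> S x \<le> 1"
    using step_exists[OF assms] by metis
  define Mf where "Mf = (\<lambda>D T U::real. 3/4 * \<bar>D\<bar> * (3/4 * \<bar>D\<bar> * sqrt \<bar>T\<bar> + sqrt (2 + \<bar>U\<bar>)) + 1)"
  have pos: "\<forall>a b c. 0 < Mf a b c"
  proof (intro allI)
    fix a b c :: real
    have "0 \<le> 3/4 * \<bar>a\<bar> * (3/4 * \<bar>a\<bar> * sqrt \<bar>b\<bar> + sqrt (2 + \<bar>c\<bar>))" by simp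
    then show "0 < Mf a b c" unfolding Mf_def by linarith
  qed
  have main: "\<forall>u mu T D. HS_weak_cons_sol psi u mu \<and> T > 0 \<and> D > 0 \<and>
       (\<forall>t\<in>{0..T}. \<forall>s\<in>{0..T}. \<forall>x y. \<bar>u t x - u s y\<bar> \<le> D * (\<bar>t - s\<bar> + \<bar>x - y\<bar>) powr (1/2))
     \<longrightarrow> (\<forall>X :: real \<Rightarrow> real.
            (\<forall>t\<in>{0..T}. (X has_real_derivative u t (X t)) (at t within {0..T}))
          \<longrightarrow> (\<forall>t\<in>{0..T}. Fplus mu 0 (X 0)
                 \<le> Fplus mu t (X 0 + u 0 (X 0) * t + Mf D T (SUP x. \<bar>u 0 x\<bar>) * t powr (3/2))))"
  proof (intro allI impI ballI)
    fix u mu T D X t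
    assume H: "HS_weak_cons_sol psi u mu \<and> T > 0 \<and> D > 0 \<and>
       (\<forall>t\<in>{0..T}. \<forall>s\<in>{0..T}. \<forall>x y. \<bar>u t x - u s y\<bar> \<le> D * (\<bar>t - s\<bar> + \<bar>x - y\<bar>) powr (1/2))"
      and t: "t \<in> {0..T}"
    have T0: "T > 0" and D0: "D > 0" using H by auto
    have holdp: "\<forall>t\<in>{0..T}. \<forall>s\<in>{0..T}. \<forall>x y. \<bar>u t x - u s y\<bar> \<le> D * (\<bar>t - s\<bar> + \<bar>x - y\<bar>) powr (1/2)"
      using H by blast
    have HS: "HS_weak_cons_sol psi u mu" using H by blast
    then obtain ux where
      P1: "\<forall>t\<ge>0. sets (mu t) = sets borel \<and> finite_measure (mu t)" and
      P3: "\<forall>t\<ge>0. E2 psi (u t)" and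
      P4: "\<forall>phi. test_fun phi \<longrightarrow>
        (LINT t:{0..}|lborel. LINT x|lborel.
            u t x * d_t phi t x + (u t x)^2 / 2 * d_x phi t x
            + 1/4 * (measure (mu t) {..<x} - measure (mu t) {x<..}) * phi (t, x))
          = - (LINT x|lborel. u 0 x * phi (0, x)) \<and>
        (LINT t:{0..}|lborel. LINT x|mu t. d_t phi t x + u t x * d_x phi t x)
          = - (LINT x|mu 0. phi (0, x))" and
      P6: "\<forall>f. continuous_on UNIV f \<and> compact (closure {x. f x \<noteq> (0::real)}) \<longrightarrow>
        continuous_on {0..} (\<lambda>t. LINT x|mu t. f x)"
      using HS unfolding HS_weak_cons_sol_def by (elim exE conjE) (rule that)
    have sets_mu: "\<And>t. 0 \<le> t \<Longrightarrow> sets (mu t) = sets borel" and fin: "\<And>t. 0 \<le> t \<Longrightarrow> finite_measure (mu t)"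
      using P1 by auto
    have weak: "\<And>phi. test_fun phi \<Longrightarrow> (LINT t:{0..}|lborel. LINT x|mu t. d_t phi t x + u t x * d_x phi t x)
          = - (LINT x|mu 0. phi (0, x))" using P4 by blast
    have vague: "\<And>g. continuous_on UNIV g \<Longrightarrow> compact (closure {x. g x \<noteq> (0::real)}) \<Longrightarrow>
                  continuous_on {0..} (\<lambda>t. LINT x|mu t. g x)" using P6 by blast
    have hold: "\<And>t t' x y. t \<in> {0..T} \<Longrightarrow> t' \<in> {0..T} \<Longrightarrow> \<bar>u t x - u t' y\<bar> \<le> D * sqrt (\<bar>t - t'\<bar> + \<bar>x - y\<bar>)"
    proof -
      fix t t' x y assume "t \<in> {0..T}" "t' \<in> {0..T}"
      then have "\<bar>u t x - u t' y\<bar> \<le> D * (\<bar>t - t'\<bar> + \<bar>x - y\<bar>) powr (1/2)" using holdp by blast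
      then show "\<bar>u t x - u t' y\<bar> \<le> D * sqrt (\<bar>t - t'\<bar> + \<bar>x - y\<bar>)" by (simp add: powr_half_sqrt)
    qed
    have K: "\<bar>u 0 x - u 0 y\<bar> \<le> D" if "\<bar>x - y\<bar> \<le> 1" for x y
    proof -
      have "\<bar>u 0 x - u 0 y\<bar> \<le> D * sqrt (\<bar>x - y\<bar>)" using hold[of 0 0 x y] T0 by simp
      also have "\<dots> \<le> D * 1" using that D0 by (intro mult_left_mono) auto
      finally show ?thesis by simp
    qed
    obtain Bb where Bb: "\<And>x. \<bar>u 0 x\<bar> \<le> Bb" using bdd_E2[OF assms _ K] P3 by force
    define U where "U = (SUP x. \<bar>u 0 x\<bar>)"
    have Ub: "\<And>x. \<bar>u 0 x\<bar> \<le> U" unfolding U_def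
      by (rule cSUP_upper) (use Bb in \<open>auto intro!: bdd_aboveI[where M=Bb]\<close>)
    have U0: "0 \<le> U" using Ub[of 0] by linarith
    show "Fplus mu 0 (X 0) \<le> Fplus mu t (X 0 + u 0 (X 0) * t + Mf D T U * t powr (3/2))"
    proof (cases "t = 0")
      case True then show ?thesis by simp
    next
      case False
      define t1 where "t1 = t"
      define x0 where "x0 = X 0"
      have t1pos: "0 < t1" and t1T: "t1 \<le> T" using t False by (auto simp: t1_def)
      define AA where "AA = D * (3/4 * D * sqrt T + sqrt (2 + U))"
      define p where "p = x0 + u 0 x0 * t1 + Mf D T U * t1 powr (3/2)"
      have MfA: "Mf D T U = 3/4 * AA + 1" using D0 T0 U0 by (simp add: Mf_def AA_def)
      have pw: "t1 powr (3/2) = t1 * sqrt t1"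
      proof -
        have "t1 powr (3/2) = t1 powr (1 + 1/2)" by simp
        also have "\<dots> = t1 powr 1 * t1 powr (1/2)" by (rule powr_add)
        also have "\<dots> = t1 * sqrt t1" using t1pos by (simp add: powr_half_sqrt)
        finally show ?thesis .
      qed
      have pn: "x0 + u 0 x0 * t1 + 3/4 * AA * (t1 * sqrt t1) \<le> p"
      proof -
        have "0 \<le> t1 * sqrt t1" using t1pos by simp
        then have "3/4 * AA * (t1 * sqrt t1) \<le> (3/4 * AA + 1) * (t1 * sqrt t1)" by (simp add: algebra_simps)
        then show ?thesis unfolding p_def MfA pw by simp
      qed
      have "Fplus mu 0 x0 \<le> Fplus mu t1 p"
      proof (rule Fplus_ge[of mu t1 p])
        show "sets (mu t1) = sets borel" "finite_measure (mu t1)" using sets_mu fin t1pos by auto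
        fix w assume w: "p < w"
        define gap where "gap = w - p"
        have gap: "0 < gap" using w by (simp add: gap_def)
        define \<eta> where "\<eta> = min (1 / D) (gap / (2 * (D * T + 1)))"
        have eta: "0 < \<eta>" using gap D0 T0 by (simp add: \<eta>_def add_pos_pos)
        define \<delta> where "\<delta> = min (gap / 4) (\<eta>^2 / 2)"
        have dpos: "0 < \<delta>" using gap eta by (simp add: \<delta>_def)
        have sq: "sqrt (2 * \<delta>) \<le> \<eta>"
        proof -
          have "2 * \<delta> \<le> \<eta>^2" by (simp add: \<delta>_def)
          then show ?thesis using eta by (intro real_le_lsqrt) auto
        qed
        have csmall: "D * sqrt (2 * \<delta>) \<le> 1"
        proof -
          have "D * sqrt (2 * \<delta>) \<le> D * \<eta>" using sq D0 by simp
          also have "\<dots> \<le> D * (1 / D)" using D0 by (intro mult_left_mono) (auto simp: \<eta>_def)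
          finally show ?thesis using D0 by simp
        qed
        have ct: "D * sqrt (2 * \<delta>) * t1 \<le> gap / 2"
        proof -
          have "D * sqrt (2 * \<delta>) * t1 \<le> D * \<eta> * T"
            using sq D0 t1T t1pos dpos eta by (intro mult_mono) auto
          also have "\<dots> \<le> D * (gap / (2 * (D * T + 1))) * T"
            using D0 T0 by (intro mult_right_mono mult_left_mono) (auto simp: \<eta>_def)
          also have "\<dots> = gap / 2 * (D * T / (D * T + 1))" using D0 T0 by (simp add: field_simps)
          also have "\<dots> \<le> gap / 2 * 1"
          proof -
            have "0 < D * T" using D0 T0 by simp
            then have "D * T / (D * T + 1) \<le> 1" by (simp add: divide_le_eq)
            then show ?thesis using gap by (intro mult_left_mono) auto
          qed
          finally show ?thesis by simp
        qed
        have d4: "\<delta> \<le> gap / 4" by (simp add: \<delta>_def)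
        define Yv where "Yv = x0 + u 0 x0 * t1 + 3/4 * AA * (t1 * sqrt t1) + 2 * \<delta> + D * sqrt (2 * \<delta>) * t1"
        have lin: "\<And>a b d. a \<le> p \<Longrightarrow> b \<le> (w - p) / 2 \<Longrightarrow> d \<le> (w - p) / 4 \<Longrightarrow> a + 2 * d + b \<le> w"
          by (simp add: field_simps)
        have Yw: "Yv \<le> w" unfolding Yv_def using lin[OF pn, of "D * sqrt (2 * \<delta>) * t1" \<delta>] ct d4
          unfolding gap_def by simp
        have bound: "measure (mu 0) {-R..<x0 + \<delta>/2} \<le> measure (mu t1) {..<w} + e" if e: "0 < e" for R e
        proof -
          interpret HSc S s mu u T D U t1 x0 R \<delta>
            by (rule HSc.intro) (use SP sets_mu fin hold Ub D0 t1pos t1T dpos csmall in simp_all)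
          have "Y = Yv" unfolding Y_def y_t1 Yv_def by (simp add: u0_def c_def A_def AA_def algebra_simps)
          have "measure (mu 0) {-R..<x0 + \<delta>/2} \<le> measure (mu t1) {..<Y} + e"
            by (rule core_bound[OF weak vague e])
          also have "measure (mu t1) {..<Y} \<le> measure (mu t1) {..<w}"
          proof -
            interpret finite_measure "mu t1" using fin t1pos by simp
            show ?thesis using Yw \<open>Y = Yv\<close> sets_mu[of t1] t1pos by (intro finite_measure_mono) auto
          qed
          finally show ?thesis by simp
        qed
        have lim: "measure (mu 0) {..<x0 + \<delta>/2} \<le> measure (mu t1) {..<w} + e" if e: "0 < e" for e
          by (rule measure_lessThan_lim[OF fin sets_mu]) (use bound[OF e] in auto)
        have "Fplus mu 0 x0 \<le> Fmu mu 0 (x0 + \<delta>/2)"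
          by (rule Fplus_le) (use sets_mu fin dpos in auto)
        also have "\<dots> \<le> measure (mu t1) {..<w}" unfolding Fmu_def
          by (rule field_le_epsilon) (rule lim)
        finally show "Fplus mu 0 x0 \<le> Fmu mu t1 w" by (simp add: Fmu_def)
      qed
      then show ?thesis by (simp add: p_def t1_def x0_def)
    qed
  qed
  show ?thesis by (intro exI[of _ Mf] conjI pos main)
qed


end
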